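(* Let $\alpha>0$, $\eta=\alpha/(L+\alpha)$, and consider AggGCG (primal) from $y_0\in\mathrm{dom}\, h$, $s_0\in\mathbb{R}^n$: for $k\ge0$, $x_{k+1}=\mathrm{argmin}_x\{\langle s_k,x\rangle+h^\alpha(x)\}$, $y_{k+1}=(1-\eta)y_k+\eta x_{k+1}$, $s_{k+1}=(1-\eta)s_k+\eta\nabla f(y_k)$. Then for all $k\ge0$: (a) $f(y_{k+1})\le(1-\eta)f(y_k)-\eta f^*(\nabla f(y_k))+\eta\langle\nabla f(y_k),x_{k+1}\rangle+\frac{L\eta^2}{2}\|x_{k+1}-y_k\|^2$; (b) $(h^\alpha)^*(-s_{k+1})\le(1-\eta)(h^\alpha)^*(-s_k)-\eta h^\alpha(x_{k+1})-\eta\langle x_{k+1},\nabla f(y_k)\rangle+\frac{\eta^2}{2\alpha}\|\nabla f(y_k)-s_k\|_*^2$; (c) $h^\alpha(y_{k+1})\le\eta h^\alpha(x_{k+1})+(1-\eta)h^\alpha(y_k)-\frac{\alpha\eta(1-\eta)}{2}\|x_{k+1}-y_k\|^2$; (d) $f^*(s_{k+1})\le\eta f^*(\nabla f(y_k))+(1-\eta)f^*(s_k)-\frac{\eta(1-\eta)}{2L}\|\nabla f(y_k)-s_k\|_*^2$.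
   Context: Let $\|\cdot\|$ be a norm on $\mathbb{R}^n$ with dual norm $\|\cdot\|_*$. Let $f:\mathbb{R}^n\to\mathbb{R}$ be convex, differentiable and $L$-smooth ($L>0$) with respect to $\|\cdot\|$, $h:\mathbb{R}^n\to(-\infty,\infty]$ closed proper convex with bounded domain, and $w:\mathbb{R}^n\to[0,+\infty]$ closed, $1$-strongly convex with respect to $\|\cdot\|$ on $\mathrm{dom}\, h$, with $\max_{\mathrm{dom}\, h}w<\infty$. Let $h^\alpha=h+\alpha w$; $^*$ denotes convex conjugate. *)

theory Defs
  imports "HOL-Analysis.Analysis" "HOL-Library.Extended_Real"
begin

definition is_norm :: "('a::real_vector \<Rightarrow> real) \<Rightarrow> bool" where
  "is_norm N \<longleftrightarrow> (\<forall>x. N x = 0 \<longleftrightarrow> x = 0) \<and> (\<forall>c x. N (c *\<^sub>R x) = \<bar>c\<bar> * N x)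
     \<and> (\<forall>x y. N (x + y) \<le> N x + N y)"

definition dual_norm :: "('a::real_inner \<Rightarrow> real) \<Rightarrow> 'a \<Rightarrow> real" where
  "dual_norm N s = Sup {s \<bullet> x | x. N x \<le> 1}"

definition fconj :: "('a::real_inner \<Rightarrow> ereal) \<Rightarrow> 'a \<Rightarrow> ereal" where
  "fconj g s = (SUP x. ereal (s \<bullet> x) - g x)"

definition edom :: "('a \<Rightarrow> ereal) \<Rightarrow> 'a set" where
  "edom g = {x. g x < \<infinity>}"

definition proper_fun :: "('a \<Rightarrow> ereal) \<Rightarrow> bool" where
  "proper_fun g \<longleftrightarrow> (\<forall>x. g x \<noteq> -\<infinity>) \<and> (\<exists>x. g x < \<infinity>)"

definition closed_fun :: "('a::topological_space \<Rightarrow> ereal) \<Rightarrow> bool" where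
  "closed_fun g \<longleftrightarrow> closed {(x, t::real). g x \<le> ereal t}"

definition econvex :: "('a::real_vector \<Rightarrow> ereal) \<Rightarrow> bool" where
  "econvex g \<longleftrightarrow> (\<forall>x y t. 0 < t \<and> t < 1 \<longrightarrow>
      g (t *\<^sub>R x + (1 - t) *\<^sub>R y) \<le> ereal t * g x + ereal (1 - t) * g y)"

definition strongly_convex_on :: "real \<Rightarrow> ('a::real_vector \<Rightarrow> real) \<Rightarrow> 'a set \<Rightarrow> ('a \<Rightarrow> ereal) \<Rightarrow> bool" where
  "strongly_convex_on \<mu> N S g \<longleftrightarrow> (\<forall>x\<in>S. \<forall>y\<in>S. \<forall>t. 0 < t \<and> t < 1 \<longrightarrow>
      g (t *\<^sub>R x + (1 - t) *\<^sub>R y) \<le> ereal t * g x + ereal (1 - t) * g y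
        - ereal (\<mu> / 2 * t * (1 - t) * (N (x - y))\<^sup>2))"

end

theory Submission imports Defs begin

lemma isn_0: "is_norm N \<Longrightarrow> N 0 = 0" by (simp add: is_norm_def)
lemma isn_scale: "is_norm N \<Longrightarrow> N (c *\<^sub>R x) = \<bar>c\<bar> * N x" by (simp add: is_norm_def)
lemma isn_tri: "is_norm N \<Longrightarrow> N (x + y) \<le> N x + N y" by (simp add: is_norm_def)
lemma isn_zero_iff: "is_norm N \<Longrightarrow> N x = 0 \<longleftrightarrow> x = 0" by (simp add: is_norm_def)
lemma isn_minus: "is_norm N \<Longrightarrow> N (- x) = N x"
  using isn_scale[of N "-1" x] by simp
lemma isn_nonneg: "is_norm N \<Longrightarrow> N x \<ge> 0"
proof -
  assume n: "is_norm N"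
  have "N (x + - x) \<le> N x + N (- x)" by (rule isn_tri[OF n])
  thus ?thesis using isn_0[OF n] isn_minus[OF n, of x] by simp
qed
lemma isn_convex: "is_norm N \<Longrightarrow> convex_on UNIV N"
proof (rule convex_onI)
  fix t :: real and x y assume n: "is_norm N" and t: "t > 0" "t < 1"
  have "N ((1 - t) *\<^sub>R x + t *\<^sub>R y) \<le> N ((1 - t) *\<^sub>R x) + N (t *\<^sub>R y)" by (rule isn_tri[OF n])
  also have "\<dots> = (1 - t) * N x + t * N y" using t by (simp add: isn_scale[OF n])
  finally show "N ((1 - t) *\<^sub>R x + t *\<^sub>R y) \<le> (1 - t) * N x + t * N y" .
qed simp

lemma isn_cont: fixes N :: "'a::euclidean_space \<Rightarrow> real"
  shows "is_norm N \<Longrightarrow> continuous_on UNIV N"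
  by (rule convex_on_continuous) (auto intro: isn_convex)

lemma isn_lower: fixes N :: "'a::euclidean_space \<Rightarrow> real"
  assumes n: "is_norm N" shows "\<exists>m>0. \<forall>x. m * norm x \<le> N x"
proof -
  have "sphere (0::'a) 1 \<noteq> {}" by simp
  then obtain v where v: "v \<in> sphere 0 1" and vm: "\<forall>u\<in>sphere 0 1. N v \<le> N u"
    using continuous_attains_inf[of "sphere (0::'a) 1" N] isn_cont[OF n]
    by (meson compact_sphere continuous_on_subset subset_UNIV)
  have "v \<noteq> 0" using v by auto
  hence mpos: "N v > 0" using isn_nonneg[OF n, of v] isn_zero_iff[OF n, of v] by linarith
  have "N v * norm x \<le> N x" for x
  proof (cases "x = 0")
    case True thus ?thesis by (simp add: isn_0[OF n])
  next
    case False
    have "(1 / norm x) *\<^sub>R x \<in> sphere 0 1" using False by simp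
    hence "N v \<le> N ((1 / norm x) *\<^sub>R x)" using vm by blast
    also have "\<dots> = N x / norm x" by (simp add: isn_scale[OF n])
    finally show ?thesis using False by (simp add: field_simps)
  qed
  thus ?thesis using mpos by blast
qed

lemma isn_ball_compact: fixes N :: "'a::euclidean_space \<Rightarrow> real"
  assumes n: "is_norm N" shows "compact {x. N x \<le> 1}"
proof -
  obtain m where m: "m > 0" "\<forall>x. m * norm x \<le> N x" using isn_lower[OF n] by blast
  have "bounded {x. N x \<le> 1}"
    unfolding bounded_iff
  proof (intro exI[of _ "1/m"] allI impI ballI)
    fix x assume "x \<in> {x. N x \<le> 1}"
    hence "N x \<le> 1" by simp
    hence "m * norm x \<le> 1" using m(2)[rule_format, of x] by linarith
    thus "norm x \<le> 1 / m" using m(1) by (simp add: field_simps mult.commute)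
  qed
  moreover have "closed {x. N x \<le> 1}"
    using isn_cont[OF n] by (intro closed_Collect_le) (auto intro: continuous_on_subset)
  ultimately show ?thesis using compact_eq_bounded_closed by blast
qed

lemma dual_attained: fixes N :: "'a::euclidean_space \<Rightarrow> real"
  assumes n: "is_norm N" shows "\<exists>v. N v \<le> 1 \<and> a \<bullet> v = dual_norm N a \<and> (\<forall>u. N u \<le> 1 \<longrightarrow> a \<bullet> u \<le> a \<bullet> v)"
proof -
  have ne: "{x. N x \<le> 1} \<noteq> {}" using isn_0[OF n] by (metis empty_iff mem_Collect_eq order_refl zero_le_one)
  obtain v where v: "v \<in> {x. N x \<le> 1}" and vm: "\<forall>u\<in>{x. N x \<le> 1}. a \<bullet> u \<le> a \<bullet> v"
    using continuous_attains_sup[OF isn_ball_compact[OF n] ne, of "\<lambda>x. a \<bullet> x"]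
      continuous_on_inner[OF continuous_on_const continuous_on_id, of "{x. N x \<le> 1}" a]
    by blast
  have "dual_norm N a = a \<bullet> v" unfolding dual_norm_def
    by (rule cSup_eq_maximum) (use v vm in auto)
  thus ?thesis using v vm by auto
qed

lemma inner_le_dual: fixes N :: "'a::euclidean_space \<Rightarrow> real"
  assumes n: "is_norm N" shows "a \<bullet> x \<le> dual_norm N a * N x"
proof -
  obtain v where v: "N v \<le> 1" "a \<bullet> v = dual_norm N a" "\<forall>u. N u \<le> 1 \<longrightarrow> a \<bullet> u \<le> a \<bullet> v"
    using dual_attained[OF n] by blast
  show ?thesis
  proof (cases "x = 0")
    case True thus ?thesis by (simp add: isn_0[OF n])
  next
    case False
    hence Np: "N x > 0" using isn_nonneg[OF n, of x] isn_zero_iff[OF n, of x] by linarith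
    have "N ((1 / N x) *\<^sub>R x) \<le> 1" using Np by (simp add: isn_scale[OF n])
    hence "a \<bullet> ((1 / N x) *\<^sub>R x) \<le> dual_norm N a" using v by auto
    thus ?thesis using Np by (simp add: field_simps)
  qed
qed

lemma dual_nonneg: fixes N :: "'a::euclidean_space \<Rightarrow> real"
  assumes n: "is_norm N" shows "dual_norm N a \<ge> 0"
proof -
  obtain v where "\<forall>u. N u \<le> 1 \<longrightarrow> a \<bullet> u \<le> a \<bullet> v" "a \<bullet> v = dual_norm N a"
    using dual_attained[OF n, of a] by blast
  thus ?thesis using isn_0[OF n] by (metis inner_zero_right zero_le_one)
qed

lemma dual_minus: fixes N :: "'a::euclidean_space \<Rightarrow> real"
  assumes n: "is_norm N" shows "dual_norm N (- a) = dual_norm N a"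
proof -
  have "{- a \<bullet> x |x. N x \<le> 1} = {a \<bullet> x |x. N x \<le> 1}"
  proof (safe)
    fix x assume "N x \<le> 1" thus "\<exists>y. - a \<bullet> x = a \<bullet> y \<and> N y \<le> 1"
      by (intro exI[of _ "-x"]) (simp add: isn_minus[OF n])
  next
    fix x assume "N x \<le> 1" thus "\<exists>y. a \<bullet> x = - a \<bullet> y \<and> N y \<le> 1"
      by (intro exI[of _ "-x"]) (simp add: isn_minus[OF n])
  qed
  thus ?thesis by (simp add: dual_norm_def)
qed

lemma dual_tri: fixes N :: "'a::euclidean_space \<Rightarrow> real"
  assumes n: "is_norm N" shows "dual_norm N (a + b) \<le> dual_norm N a + dual_norm N b"
proof -
  obtain v where v: "N v \<le> 1" "(a + b) \<bullet> v = dual_norm N (a + b)"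
    using dual_attained[OF n] by blast
  have "a \<bullet> v \<le> dual_norm N a" "b \<bullet> v \<le> dual_norm N b"
    using inner_le_dual[OF n, of a v] inner_le_dual[OF n, of b v] v(1) dual_nonneg[OF n, of a]
      dual_nonneg[OF n, of b] by (auto intro: order.trans mult_left_le)
  thus ?thesis using v by (simp add: inner_add_left)
qed


lemma line_deriv:
  fixes f :: "'a::euclidean_space \<Rightarrow> real"
  assumes fg: "\<And>z. (f has_derivative (\<lambda>v. df z \<bullet> v)) (at z)"
  shows "((\<lambda>t. f (y + t *\<^sub>R d)) has_real_derivative (df (y + t *\<^sub>R d) \<bullet> d)) (at t within S)"
proof -
  have l: "((\<lambda>t. y + t *\<^sub>R d) has_derivative (\<lambda>u. u *\<^sub>R d)) (at t within S)"
    by (auto intro!: derivative_eq_intros)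
  have "((\<lambda>t. f (y + t *\<^sub>R d)) has_derivative (\<lambda>u. df (y + t *\<^sub>R d) \<bullet> (u *\<^sub>R d))) (at t within S)"
    using has_derivative_in_compose[OF l has_derivative_subset[OF fg subset_UNIV]]
    by (simp add: o_def)
  moreover have "(\<lambda>u. df (y + t *\<^sub>R d) \<bullet> (u *\<^sub>R d)) = (*) (df (y + t *\<^sub>R d) \<bullet> d)"
    by (auto simp: mult.commute)
  ultimately show ?thesis by (simp add: has_field_derivative_def)
qed

lemma descent:
  fixes f :: "'a::euclidean_space \<Rightarrow> real"
  assumes n: "is_norm N"
    and fg: "\<And>z. (f has_derivative (\<lambda>v. df z \<bullet> v)) (at z)"
    and sm: "\<And>u v. dual_norm N (df u - df v) \<le> L * N (u - v)"
  shows "f (y + d) \<le> f y + df y \<bullet> d + L / 2 * (N d)\<^sup>2"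
proof -
  define \<psi> where "\<psi> t = f (y + t *\<^sub>R d) - t * (df y \<bullet> d) - L / 2 * t\<^sup>2 * (N d)\<^sup>2" for t
  have "\<psi> 1 \<le> \<psi> 0"
  proof (rule DERIV_nonpos_imp_nonincreasing[of 0 1 \<psi>])
    fix t :: real assume t: "0 \<le> t" "t \<le> 1"
    have D: "DERIV \<psi> t :> df (y + t *\<^sub>R d) \<bullet> d - df y \<bullet> d - L / 2 * (2 * t) * (N d)\<^sup>2"
      unfolding \<psi>_def
      by (rule line_deriv[OF fg] derivative_eq_intros refl | simp)+
    have "df (y + t *\<^sub>R d) \<bullet> d - df y \<bullet> d = (df (y + t *\<^sub>R d) - df y) \<bullet> d"
      by (simp add: inner_diff_left)
    also have "\<dots> \<le> dual_norm N (df (y + t *\<^sub>R d) - df y) * N d" by (rule inner_le_dual[OF n])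
    also have "\<dots> \<le> (L * N (t *\<^sub>R d)) * N d"
      using sm[of "y + t *\<^sub>R d" y] isn_nonneg[OF n, of d] by (simp add: mult_right_mono)
    also have "\<dots> = L * t * (N d)\<^sup>2" using t by (simp add: isn_scale[OF n] power2_eq_square)
    finally show "\<exists>y. DERIV \<psi> t :> y \<and> y \<le> 0" using D by (intro exI[of _ _]) auto
  qed simp
  thus ?thesis by (simp add: \<psi>_def)
qed

lemma tangent:
  fixes f :: "'a::euclidean_space \<Rightarrow> real"
  assumes fc: "convex_on UNIV f"
    and fg: "\<And>z. (f has_derivative (\<lambda>v. df z \<bullet> v)) (at z)"
  shows "f y + df y \<bullet> (z - y) \<le> f z"
proof -
  define \<phi> where "\<phi> t = f (y + t *\<^sub>R (z - y))" for t
  have c: "convex_on UNIV \<phi>"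
  proof (rule convex_onI)
    fix t a b :: real assume t: "t > 0" "t < 1"
    have "\<phi> ((1 - t) *\<^sub>R a + t *\<^sub>R b) = f ((1 - t) *\<^sub>R (y + a *\<^sub>R (z - y)) + t *\<^sub>R (y + b *\<^sub>R (z - y)))"
      unfolding \<phi>_def by (simp add: algebra_simps)
    also have "\<dots> \<le> (1 - t) * \<phi> a + t * \<phi> b" unfolding \<phi>_def
      using convex_onD[OF fc, of t] t by simp
    finally show "\<phi> ((1 - t) *\<^sub>R a + t *\<^sub>R b) \<le> (1 - t) * \<phi> a + t * \<phi> b" .
  qed simp
  have "\<phi> 1 - \<phi> 0 \<ge> (df (y + 0 *\<^sub>R (z - y)) \<bullet> (z - y)) * (1 - 0)"
    by (rule convex_on_imp_above_tangent[OF c]) (use line_deriv[OF fg, of y "z - y" 0 UNIV] in \<open>auto simp: \<phi>_def[abs_def]\<close>)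
  thus ?thesis by (simp add: \<phi>_def)
qed


lemma dual_scale: fixes N :: "'a::euclidean_space \<Rightarrow> real"
  assumes n: "is_norm N" and c: "c \<ge> 0" shows "dual_norm N (c *\<^sub>R a) = c * dual_norm N a"
proof -
  obtain v1 where v1: "N v1 \<le> 1" "(c *\<^sub>R a) \<bullet> v1 = dual_norm N (c *\<^sub>R a)"
    using dual_attained[OF n] by blast
  obtain v2 where v2: "N v2 \<le> 1" "a \<bullet> v2 = dual_norm N a"
    using dual_attained[OF n] by blast
  have "a \<bullet> v1 \<le> dual_norm N a"
    using inner_le_dual[OF n, of a v1] v1(1) dual_nonneg[OF n, of a] by (meson mult_left_le order.trans)
  hence 1: "dual_norm N (c *\<^sub>R a) \<le> c * dual_norm N a" using v1(2) c by (metis inner_scaleR_left mult_left_mono)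
  have "(c *\<^sub>R a) \<bullet> v2 \<le> dual_norm N (c *\<^sub>R a)"
    using inner_le_dual[OF n, of "c *\<^sub>R a" v2] v2(1) dual_nonneg[OF n, of "c *\<^sub>R a"] by (meson mult_left_le order.trans)
  hence "c * dual_norm N a \<le> dual_norm N (c *\<^sub>R a)" using v2(2) by simp
  thus ?thesis using 1 by linarith
qed

lemma conj_aux:
  fixes f :: "'a::euclidean_space \<Rightarrow> real"
  assumes n: "is_norm N"
    and fg: "\<And>z. (f has_derivative (\<lambda>v. df z \<bullet> v)) (at z)"
    and sm: "\<And>u v. dual_norm N (df u - df v) \<le> L * N (u - v)"
    and L: "L > 0"
    and A: "\<And>u. a \<bullet> u - f u \<le> A"
  shows "a \<bullet> z - f z + (dual_norm N (a - df z))\<^sup>2 / (2 * L) \<le> A"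
proof -
  define c where "c = df z"
  define D where "D = dual_norm N (a - c)"
  obtain v0 where v0: "N v0 \<le> 1" "(a - c) \<bullet> v0 = D" using dual_attained[OF n] D_def by blast
  have D0: "D \<ge> 0" unfolding D_def by (rule dual_nonneg[OF n])
  define v where "v = (D / L) *\<^sub>R v0"
  have Nv: "N v \<le> D / L" unfolding v_def using D0 L v0(1) by (simp add: isn_scale[OF n] divide_right_mono mult_left_le)
  have Nv0: "N v \<ge> 0" by (rule isn_nonneg[OF n])
  have Nv2: "(N v)\<^sup>2 \<le> (D / L)\<^sup>2" using Nv Nv0 by (simp add: power_mono)
  have av: "(a - c) \<bullet> v = D\<^sup>2 / L" unfolding v_def using v0(2) by (simp add: power2_eq_square)
  have "f (z + v) \<le> f z + c \<bullet> v + L / 2 * (N v)\<^sup>2" unfolding c_def by (rule descent[OF n fg sm])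
  moreover have "a \<bullet> (z + v) - f (z + v) \<le> A" by (rule A)
  moreover have "L / 2 * (N v)\<^sup>2 \<le> L / 2 * (D / L)\<^sup>2" using Nv2 L by simp
  moreover have "L / 2 * (D / L)\<^sup>2 = D\<^sup>2 / (2 * L)" using L by (simp add: power2_eq_square field_simps)
  ultimately have "a \<bullet> z - f z + (a - c) \<bullet> v - D\<^sup>2 / (2 * L) \<le> A"
    by (simp add: inner_add_right inner_diff_left)
  thus ?thesis using av unfolding D_def c_def by (simp add: field_simps power2_eq_square)
qed

lemma conj_sc_real:
  fixes f :: "'a::euclidean_space \<Rightarrow> real"
  assumes n: "is_norm N"
    and fg: "\<And>z. (f has_derivative (\<lambda>v. df z \<bullet> v)) (at z)"
    and sm: "\<And>u v. dual_norm N (df u - df v) \<le> L * N (u - v)"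
    and L: "L > 0" and e: "0 < \<eta>" "\<eta> < 1"
    and A: "\<And>u. s \<bullet> u - f u \<le> A"
    and B: "\<And>u. g \<bullet> u - f u \<le> B"
  shows "((1 - \<eta>) *\<^sub>R s + \<eta> *\<^sub>R g) \<bullet> z - f z
          \<le> \<eta> * B + (1 - \<eta>) * A - \<eta> * (1 - \<eta>) / (2 * L) * (dual_norm N (g - s))\<^sup>2"
proof -
  define a where "a = dual_norm N (s - df z)"
  define b where "b = dual_norm N (g - df z)"
  define G where "G = dual_norm N (g - s)"
  have a0: "a \<ge> 0" "b \<ge> 0" "G \<ge> 0" unfolding a_def b_def G_def by (rule dual_nonneg[OF n])+
  have "G \<le> b + a"
  proof -
    have "g - s = (g - df z) + - (s - df z)" by simp
    hence "G = dual_norm N ((g - df z) + - (s - df z))" unfolding G_def by metis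
    also have "\<dots> \<le> b + a" unfolding a_def b_def
      using dual_tri[OF n] dual_minus[OF n] by metis
    finally show ?thesis .
  qed
  hence G2: "G\<^sup>2 \<le> (b + a)\<^sup>2" using a0 by (simp add: power_mono)
  have 1: "s \<bullet> z - f z + a\<^sup>2 / (2 * L) \<le> A" unfolding a_def by (rule conj_aux[OF n fg sm L A])
  have 2: "g \<bullet> z - f z + b\<^sup>2 / (2 * L) \<le> B" unfolding b_def by (rule conj_aux[OF n fg sm L B])
  have key: "\<eta> * (1 - \<eta>) * (b + a)\<^sup>2 \<le> (1 - \<eta>) * a\<^sup>2 + \<eta> * b\<^sup>2"
  proof -
    have "(1 - \<eta>) * a\<^sup>2 + \<eta> * b\<^sup>2 - \<eta> * (1 - \<eta>) * (b + a)\<^sup>2 = ((1 - \<eta>) * a - \<eta> * b)\<^sup>2"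
      by (simp add: power2_eq_square algebra_simps)
    thus ?thesis by (metis diff_ge_0_iff_ge zero_le_power2)
  qed
  have k2: "\<eta> * (1 - \<eta>) * G\<^sup>2 \<le> (1 - \<eta>) * a\<^sup>2 + \<eta> * b\<^sup>2"
    using key G2 e by (meson mult_left_mono order.trans less_eq_real_def mult_pos_pos diff_gt_0_iff_gt)
  have "(1 - \<eta>) * (s \<bullet> z - f z + a\<^sup>2 / (2 * L)) + \<eta> * (g \<bullet> z - f z + b\<^sup>2 / (2 * L))
        \<le> (1 - \<eta>) * A + \<eta> * B"
    using 1 2 e by (intro add_mono mult_left_mono) auto
  moreover have "\<eta> * (1 - \<eta>) / (2 * L) * G\<^sup>2 \<le> ((1 - \<eta>) * a\<^sup>2 + \<eta> * b\<^sup>2) / (2 * L)"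
    using k2 L by (simp add: divide_right_mono)
  ultimately show ?thesis unfolding G_def[symmetric]
    by (simp add: inner_add_left algebra_simps add_divide_distrib diff_divide_distrib)
qed

lemma sc_min_growth:
  fixes N :: "'a::euclidean_space \<Rightarrow> real"
  assumes n: "is_norm N" and al: "\<alpha> > 0"
    and xD: "x \<in> D" and zD: "z \<in> D"
    and mn: "\<And>u. u \<in> D \<Longrightarrow> s \<bullet> x + \<Phi> x \<le> s \<bullet> u + \<Phi> u"
    and sc: "\<And>a b t. a \<in> D \<Longrightarrow> b \<in> D \<Longrightarrow> 0 < t \<Longrightarrow> t < 1 \<Longrightarrow>
        t *\<^sub>R a + (1 - t) *\<^sub>R b \<in> D \<and>
        \<Phi> (t *\<^sub>R a + (1 - t) *\<^sub>R b) \<le> t * \<Phi> a + (1 - t) * \<Phi> b - \<alpha> / 2 * t * (1 - t) * (N (a - b))\<^sup>2"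
  shows "s \<bullet> z + \<Phi> z \<ge> s \<bullet> x + \<Phi> x + \<alpha> / 2 * (N (z - x))\<^sup>2"
proof -
  define \<Delta> where "\<Delta> = (s \<bullet> z + \<Phi> z) - (s \<bullet> x + \<Phi> x)"
  define K where "K = \<alpha> / 2 * (N (z - x))\<^sup>2"
  have K0: "K \<ge> 0" unfolding K_def using al by simp
  have gt: "\<Delta> \<ge> K * (1 - t)" if t: "0 < t" "t < 1" for t
  proof -
    define p where "p = t *\<^sub>R z + (1 - t) *\<^sub>R x"
    have pD: "p \<in> D" and pl: "\<Phi> p \<le> t * \<Phi> z + (1 - t) * \<Phi> x - \<alpha> / 2 * t * (1 - t) * (N (z - x))\<^sup>2"
      using sc[OF zD xD t] unfolding p_def by auto
    have "s \<bullet> x + \<Phi> x \<le> s \<bullet> p + \<Phi> p" by (rule mn[OF pD])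
    also have "s \<bullet> p = t * (s \<bullet> z) + (1 - t) * (s \<bullet> x)" unfolding p_def by (simp add: inner_add_right)
    finally have "t * (s \<bullet> x + \<Phi> x) \<le> t * (s \<bullet> z + \<Phi> z) - t * (K * (1 - t))"
      using pl unfolding K_def by (simp add: algebra_simps)
    hence "t * (s \<bullet> x + \<Phi> x) \<le> t * ((s \<bullet> z + \<Phi> z) - K * (1 - t))" by (simp add: algebra_simps)
    hence "s \<bullet> x + \<Phi> x \<le> (s \<bullet> z + \<Phi> z) - K * (1 - t)" using t by simp
    thus ?thesis unfolding \<Delta>_def by simp
  qed
  have "\<Delta> \<ge> K"
  proof (rule ccontr)
    assume "\<not> K \<le> \<Delta>"
    hence lt: "\<Delta> < K" by simp
    have d0: "\<Delta> \<ge> 0" using gt[of "1/2"] K0 by simp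
    define t where "t = (K - \<Delta>) / (2 * K)"
    have Kp: "K > 0" using lt d0 by simp
    have t: "0 < t" "t < 1" unfolding t_def using lt d0 Kp by (auto simp: field_simps)
    have "K * (1 - t) = (K + \<Delta>) / 2" unfolding t_def using Kp by (simp add: field_simps)
    thus False using gt[OF t] lt by simp
  qed
  thus ?thesis unfolding \<Delta>_def K_def by simp
qed

lemma conj_smooth_real:
  fixes N :: "'a::euclidean_space \<Rightarrow> real"
  assumes n: "is_norm N" and al: "\<alpha> > 0"
    and xD: "x \<in> D" and zD: "z \<in> D"
    and mn: "\<And>u. u \<in> D \<Longrightarrow> s \<bullet> x + \<Phi> x \<le> s \<bullet> u + \<Phi> u"
    and sc: "\<And>a b t. a \<in> D \<Longrightarrow> b \<in> D \<Longrightarrow> 0 < t \<Longrightarrow> t < 1 \<Longrightarrow>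
        t *\<^sub>R a + (1 - t) *\<^sub>R b \<in> D \<and>
        \<Phi> (t *\<^sub>R a + (1 - t) *\<^sub>R b) \<le> t * \<Phi> a + (1 - t) * \<Phi> b - \<alpha> / 2 * t * (1 - t) * (N (a - b))\<^sup>2"
  shows "s' \<bullet> z + \<Phi> z \<ge> s' \<bullet> x + \<Phi> x - (dual_norm N (s' - s))\<^sup>2 / (2 * \<alpha>)"
proof -
  have g: "s \<bullet> z + \<Phi> z \<ge> s \<bullet> x + \<Phi> x + \<alpha> / 2 * (N (z - x))\<^sup>2"
    by (rule sc_min_growth[OF n al xD zD mn sc])
  define d where "d = s' - s"
  define Dn where "Dn = dual_norm N d"
  define m where "m = N (z - x)"
  have "d \<bullet> (x - z) \<le> Dn * N (x - z)" unfolding Dn_def by (rule inner_le_dual[OF n])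
  moreover have "N (x - z) = m" unfolding m_def using isn_minus[OF n, of "z - x"] by simp
  ultimately have dz: "d \<bullet> z \<ge> d \<bullet> x - Dn * m" by (simp add: inner_diff_right)
  have sq: "\<alpha> / 2 * m\<^sup>2 - Dn * m \<ge> - Dn\<^sup>2 / (2 * \<alpha>)"
  proof -
    have "0 \<le> (\<alpha> * m - Dn)\<^sup>2" by simp
    hence "0 \<le> \<alpha>\<^sup>2 * m\<^sup>2 - 2 * \<alpha> * Dn * m + Dn\<^sup>2" by (simp add: power2_eq_square algebra_simps)
    hence "0 \<le> (\<alpha>\<^sup>2 * m\<^sup>2 - 2 * \<alpha> * Dn * m + Dn\<^sup>2) / (2 * \<alpha>)" using al by simp
    also have "\<dots> = \<alpha> / 2 * m\<^sup>2 - Dn * m + Dn\<^sup>2 / (2 * \<alpha>)" using al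
      by (simp add: field_simps power2_eq_square)
    finally show ?thesis by simp
  qed
  have "s' = s + d" unfolding d_def by simp
  hence "s' \<bullet> z + \<Phi> z = (s \<bullet> z + \<Phi> z) + d \<bullet> z" "s' \<bullet> x + \<Phi> x = (s \<bullet> x + \<Phi> x) + d \<bullet> x"
    by (simp_all add: inner_add_left)
  thus ?thesis using g dz sq unfolding m_def[symmetric] Dn_def d_def[symmetric] by linarith
qed

lemma conj_min:
  assumes mn: "\<And>z. ereal (s \<bullet> x) + g x \<le> ereal (s \<bullet> z) + g z"
    and gx: "g x = ereal c" and ninf: "\<And>z. g z \<noteq> -\<infinity>"
  shows "fconj g (- s) = ereal (- (s \<bullet> x) - c)"
  unfolding fconj_def
proof (rule antisym)
  show "(SUP z. ereal (- s \<bullet> z) - g z) \<le> ereal (- (s \<bullet> x) - c)"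
  proof (rule SUP_least)
    fix z
    show "ereal (- s \<bullet> z) - g z \<le> ereal (- (s \<bullet> x) - c)"
    proof (cases "g z")
      case (real r)
      have "ereal (s \<bullet> x + c) \<le> ereal (s \<bullet> z + r)" using mn[of z] gx real by simp
      thus ?thesis using real by simp
    next
      case PInf thus ?thesis by simp
    next
      case MInf thus ?thesis using ninf by simp
    qed
  qed
  show "ereal (- (s \<bullet> x) - c) \<le> (SUP z. ereal (- s \<bullet> z) - g z)"
    by (rule SUP_upper2[of x]) (auto simp: gx)
qed

lemma fenchel:
  fixes f :: "'a::euclidean_space \<Rightarrow> real"
  assumes fc: "convex_on UNIV f"
    and fg: "\<And>z. (f has_derivative (\<lambda>v. df z \<bullet> v)) (at z)"
  shows "fconj (\<lambda>z. ereal (f z)) (df y) = ereal (df y \<bullet> y - f y)"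
  unfolding fconj_def
proof (rule antisym)
  show "(SUP z. ereal (df y \<bullet> z) - ereal (f z)) \<le> ereal (df y \<bullet> y - f y)"
  proof (rule SUP_least)
    fix z
    have "f y + df y \<bullet> (z - y) \<le> f z" by (rule tangent[OF fc fg])
    thus "ereal (df y \<bullet> z) - ereal (f z) \<le> ereal (df y \<bullet> y - f y)" by (simp add: inner_diff_right)
  qed
  show "ereal (df y \<bullet> y - f y) \<le> (SUP z. ereal (df y \<bullet> z) - ereal (f z))"
    by (rule SUP_upper2[of y]) auto
qed

lemma fconj_upper: "ereal (s \<bullet> z) - g z \<le> fconj g s"
  unfolding fconj_def by (rule SUP_upper) simp

theorem lemmaC1:
  fixes N :: "real^'n \<Rightarrow> real"
    and f :: "real^'n \<Rightarrow> real" and df :: "real^'n \<Rightarrow> real^'n"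
    and h w :: "real^'n \<Rightarrow> ereal"
    and L \<alpha> \<eta> :: real
    and x y s :: "nat \<Rightarrow> real^'n"
  assumes norm: "is_norm N"
    and f_convex: "convex_on UNIV f"
    and f_grad: "\<And>z. (f has_derivative (\<lambda>v. df z \<bullet> v)) (at z)"
    and L_pos: "L > 0"
    and f_smooth: "\<And>u v. dual_norm N (df u - df v) \<le> L * N (u - v)"
    and h_closed: "closed_fun h" and h_proper: "proper_fun h" and h_convex: "econvex h"
    and h_bdd: "bounded (edom h)"
    and w_nonneg: "\<And>z. w z \<ge> 0"
    and w_closed: "closed_fun w"
    and w_sc: "strongly_convex_on 1 N (edom h) w"
    and w_max: "\<exists>M::real. \<forall>z\<in>edom h. w z \<le> ereal M"
    and alpha_pos: "\<alpha> > 0"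
    and eta_def: "\<eta> = \<alpha> / (L + \<alpha>)"
    and y0: "y 0 \<in> edom h"
    and x_step: "\<And>k z. ereal (s k \<bullet> x (Suc k)) + (h (x (Suc k)) + ereal \<alpha> * w (x (Suc k)))
                        \<le> ereal (s k \<bullet> z) + (h z + ereal \<alpha> * w z)"
    and y_step: "\<And>k. y (Suc k) = (1 - \<eta>) *\<^sub>R y k + \<eta> *\<^sub>R x (Suc k)"
    and s_step: "\<And>k. s (Suc k) = (1 - \<eta>) *\<^sub>R s k + \<eta> *\<^sub>R df (y k)"
  shows "\<forall>k. let ha = (\<lambda>z. h z + ereal \<alpha> * w z); F = (\<lambda>z. ereal (f z)) in
     ereal (f (y (Suc k))) \<le> ereal ((1 - \<eta>) * f (y k)) - ereal \<eta> * fconj F (df (y k))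
        + ereal (\<eta> * (df (y k) \<bullet> x (Suc k)) + L * \<eta>\<^sup>2 / 2 * (N (x (Suc k) - y k))\<^sup>2)
   \<and> fconj ha (- s (Suc k)) \<le> ereal (1 - \<eta>) * fconj ha (- s k) - ereal \<eta> * ha (x (Suc k))
        - ereal (\<eta> * (x (Suc k) \<bullet> df (y k)))
        + ereal (\<eta>\<^sup>2 / (2 * \<alpha>) * (dual_norm N (df (y k) - s k))\<^sup>2)
   \<and> ha (y (Suc k)) \<le> ereal \<eta> * ha (x (Suc k)) + ereal (1 - \<eta>) * ha (y k)
        - ereal (\<alpha> * \<eta> * (1 - \<eta>) / 2 * (N (x (Suc k) - y k))\<^sup>2)
   \<and> fconj F (s (Suc k)) \<le> ereal \<eta> * fconj F (df (y k)) + ereal (1 - \<eta>) * fconj F (s k)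
        - ereal (\<eta> * (1 - \<eta>) / (2 * L) * (dual_norm N (df (y k) - s k))\<^sup>2)"
proof -
  define H where "H z = real_of_ereal (h z)" for z
  define W where "W z = real_of_ereal (w z)" for z
  define \<Phi> where "\<Phi> z = H z + \<alpha> * W z" for z
  have e: "0 < \<eta>" "\<eta> < 1" using eta_def L_pos alpha_pos by (simp_all add: divide_pos_pos)
  obtain M where M: "\<forall>z\<in>edom h. w z \<le> ereal M" using w_max by blast
  have hD: "h z = ereal (H z)" if "z \<in> edom h" for z
  proof -
    have "h z < \<infinity>" "h z \<noteq> -\<infinity>" using that h_proper by (auto simp: edom_def proper_fun_def)
    thus ?thesis unfolding H_def by (cases "h z") auto
  qed
  have wD: "w z = ereal (W z)" if "z \<in> edom h" for z
  proof -
    have "w z \<le> ereal M" "w z \<ge> 0" using that M w_nonneg by auto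
    thus ?thesis unfolding W_def by (cases "w z") auto
  qed
  have haD: "h z + ereal \<alpha> * w z = ereal (\<Phi> z)" if "z \<in> edom h" for z
    using hD[OF that] wD[OF that] by (simp add: \<Phi>_def)
  have aw: "ereal \<alpha> * w z \<ge> 0" for z using w_nonneg[of z] alpha_pos by simp
  have haN: "h z + ereal \<alpha> * w z = \<infinity>" if "z \<notin> edom h" for z
  proof -
    have "h z = \<infinity>" using that by (simp add: edom_def)
    thus ?thesis using aw[of z] by simp
  qed
  have ha_ninf: "h z + ereal \<alpha> * w z \<noteq> -\<infinity>" for z
    by (cases "z \<in> edom h") (simp_all add: haD haN)
  have sc: "t *\<^sub>R a + (1 - t) *\<^sub>R b \<in> edom h \<and>
        \<Phi> (t *\<^sub>R a + (1 - t) *\<^sub>R b) \<le> t * \<Phi> a + (1 - t) * \<Phi> b - \<alpha> / 2 * t * (1 - t) * (N (a - b))\<^sup>2"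
    if a: "a \<in> edom h" and b: "b \<in> edom h" and t: "0 < t" "t < 1" for a b t
  proof -
    let ?c = "t *\<^sub>R a + (1 - t) *\<^sub>R b"
    have "h ?c \<le> ereal t * h a + ereal (1 - t) * h b" using h_convex t by (simp add: econvex_def)
    hence hc: "h ?c \<le> ereal (t * H a + (1 - t) * H b)" using hD[OF a] hD[OF b] by simp
    hence cD: "?c \<in> edom h" by (auto simp: edom_def le_less_trans)
    have "w ?c \<le> ereal t * w a + ereal (1 - t) * w b - ereal (1 / 2 * t * (1 - t) * (N (a - b))\<^sup>2)"
      using w_sc a b t unfolding strongly_convex_on_def by blast
    hence W1: "W ?c \<le> t * W a + (1 - t) * W b - 1 / 2 * t * (1 - t) * (N (a - b))\<^sup>2"
      using wD[OF a] wD[OF b] wD[OF cD] by simp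
    have H1: "H ?c \<le> t * H a + (1 - t) * H b" using hc hD[OF cD] by simp
    have "\<alpha> * W ?c \<le> \<alpha> * (t * W a + (1 - t) * W b - 1 / 2 * t * (1 - t) * (N (a - b))\<^sup>2)"
      using W1 alpha_pos by simp
    hence "\<Phi> ?c \<le> t * \<Phi> a + (1 - t) * \<Phi> b - \<alpha> / 2 * t * (1 - t) * (N (a - b))\<^sup>2"
      using H1 unfolding \<Phi>_def by (simp add: algebra_simps)
    thus ?thesis using cD by simp
  qed
  obtain z0 where z0: "z0 \<in> edom h" using h_proper by (auto simp: proper_fun_def edom_def)
  have xD: "x (Suc k) \<in> edom h" for k
  proof (rule ccontr)
    assume "x (Suc k) \<notin> edom h"
    hence "ereal (s k \<bullet> x (Suc k)) + (h (x (Suc k)) + ereal \<alpha> * w (x (Suc k))) = \<infinity>"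
      by (simp add: haN)
    moreover have "ereal (s k \<bullet> z0) + (h z0 + ereal \<alpha> * w z0) = ereal (s k \<bullet> z0 + \<Phi> z0)" by (simp add: haD[OF z0])
    ultimately show False using x_step[of k z0] by (metis ereal_infty_less_eq(1) infinity_ereal_def ereal.distinct(1))
  qed
  have yD: "y k \<in> edom h" for k
  proof (induction k)
    case 0 show ?case by (rule y0)
  next
    case (Suc k)
    have "y (Suc k) = \<eta> *\<^sub>R x (Suc k) + (1 - \<eta>) *\<^sub>R y k" by (simp add: y_step)
    thus ?case using sc[OF xD Suc e] by simp
  qed
  have mn: "s k \<bullet> x (Suc k) + \<Phi> (x (Suc k)) \<le> s k \<bullet> u + \<Phi> u" if "u \<in> edom h" for k u
    using x_step[of k u] haD[OF that] haD[OF xD[of k]] by simp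
  have conjk: "fconj (\<lambda>z. h z + ereal \<alpha> * w z) (- s k) = ereal (- (s k \<bullet> x (Suc k)) - \<Phi> (x (Suc k)))" for k
    by (rule conj_min[OF x_step haD[OF xD] ha_ninf])
  have fen: "fconj (\<lambda>z. ereal (f z)) (df u) = ereal (df u \<bullet> u - f u)" for u
    by (rule fenchel[OF f_convex f_grad])
  show ?thesis unfolding Let_def
  proof (intro allI conjI)
    fix k
    define g where "g = df (y k)"
    define xk where "xk = x (Suc k)"
    define yk where "yk = y k"
    have y': "y (Suc k) = yk + \<eta> *\<^sub>R (xk - yk)" unfolding xk_def yk_def
      by (simp add: y_step algebra_simps)
    have Ns: "N (\<eta> *\<^sub>R (xk - yk)) = \<eta> * N (xk - yk)" using e by (simp add: isn_scale[OF norm])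
    have "f (y (Suc k)) \<le> f yk + g \<bullet> (\<eta> *\<^sub>R (xk - yk)) + L / 2 * (N (\<eta> *\<^sub>R (xk - yk)))\<^sup>2"
      unfolding y' g_def yk_def by (rule descent[OF norm f_grad f_smooth])
    hence "f (y (Suc k)) \<le> (1 - \<eta>) * f yk - \<eta> * (g \<bullet> yk - f yk) + (\<eta> * (g \<bullet> xk) + L * \<eta>\<^sup>2 / 2 * (N (xk - yk))\<^sup>2)"
      unfolding Ns by (simp add: inner_diff_right power2_eq_square algebra_simps)
    thus "ereal (f (y (Suc k))) \<le> ereal ((1 - \<eta>) * f (y k)) - ereal \<eta> * fconj (\<lambda>z. ereal (f z)) (df (y k))
        + ereal (\<eta> * (df (y k) \<bullet> x (Suc k)) + L * \<eta>\<^sup>2 / 2 * (N (x (Suc k) - y k))\<^sup>2)"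
      unfolding fen g_def xk_def yk_def by simp
  next
    fix k
    define g where "g = df (y k)"
    define xk where "xk = x (Suc k)"
    have ds: "s (Suc k) - s k = \<eta> *\<^sub>R (g - s k)" unfolding g_def by (simp add: s_step algebra_simps)
    have dn: "dual_norm N (s (Suc k) - s k) = \<eta> * dual_norm N (g - s k)"
      unfolding ds using e by (simp add: dual_scale[OF norm])
    define R where "R = - (s (Suc k) \<bullet> xk) - \<Phi> xk + \<eta>\<^sup>2 / (2 * \<alpha>) * (dual_norm N (g - s k))\<^sup>2"
    have "fconj (\<lambda>z. h z + ereal \<alpha> * w z) (- s (Suc k)) \<le> ereal R"
      unfolding fconj_def
    proof (rule SUP_least)
      fix z
      show "ereal (- s (Suc k) \<bullet> z) - (h z + ereal \<alpha> * w z) \<le> ereal R"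
      proof (cases "z \<in> edom h")
        case False thus ?thesis by (simp add: haN)
      next
        case True
        have "s (Suc k) \<bullet> z + \<Phi> z \<ge> s (Suc k) \<bullet> xk + \<Phi> xk - (dual_norm N (s (Suc k) - s k))\<^sup>2 / (2 * \<alpha>)"
          unfolding xk_def
          by (rule conj_smooth_real[OF norm alpha_pos xD True mn sc]) auto
        hence "- s (Suc k) \<bullet> z - \<Phi> z \<le> R" unfolding R_def dn by (simp add: power2_eq_square field_simps)
        thus ?thesis using haD[OF True] by simp
      qed
    qed
    moreover have "ereal R = ereal (1 - \<eta>) * fconj (\<lambda>z. h z + ereal \<alpha> * w z) (- s k) - ereal \<eta> * (h xk + ereal \<alpha> * w xk)
        - ereal (\<eta> * (xk \<bullet> g)) + ereal (\<eta>\<^sup>2 / (2 * \<alpha>) * (dual_norm N (g - s k))\<^sup>2)"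
      unfolding conjk haD[OF xD] xk_def R_def g_def
      by (simp add: s_step inner_add_left inner_commute algebra_simps)
    ultimately show "fconj (\<lambda>z. h z + ereal \<alpha> * w z) (- s (Suc k)) \<le> ereal (1 - \<eta>) * fconj (\<lambda>z. h z + ereal \<alpha> * w z) (- s k) - ereal \<eta> * (h (x (Suc k)) + ereal \<alpha> * w (x (Suc k)))
        - ereal (\<eta> * (x (Suc k) \<bullet> df (y k)))
        + ereal (\<eta>\<^sup>2 / (2 * \<alpha>) * (dual_norm N (df (y k) - s k))\<^sup>2)"
      unfolding xk_def g_def by simp
  next
    fix k
    have y': "y (Suc k) = \<eta> *\<^sub>R x (Suc k) + (1 - \<eta>) *\<^sub>R y k" by (simp add: y_step)
    have "\<Phi> (y (Suc k)) \<le> \<eta> * \<Phi> (x (Suc k)) + (1 - \<eta>) * \<Phi> (y k) - \<alpha> / 2 * \<eta> * (1 - \<eta>) * (N (x (Suc k) - y k))\<^sup>2"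
      unfolding y' using sc[OF xD yD e] by blast
    thus "h (y (Suc k)) + ereal \<alpha> * w (y (Suc k)) \<le> ereal \<eta> * (h (x (Suc k)) + ereal \<alpha> * w (x (Suc k))) + ereal (1 - \<eta>) * (h (y k) + ereal \<alpha> * w (y k))
        - ereal (\<alpha> * \<eta> * (1 - \<eta>) / 2 * (N (x (Suc k) - y k))\<^sup>2)"
      by (simp add: haD[OF xD] haD[OF yD] mult.commute mult.left_commute)
  next
    fix k
    define g where "g = df (y k)"
    have B: "g \<bullet> u - f u \<le> g \<bullet> y k - f (y k)" for u
      using fconj_upper[of g u "\<lambda>z. ereal (f z)"] unfolding g_def fen by simp
    show "fconj (\<lambda>z. ereal (f z)) (s (Suc k)) \<le> ereal \<eta> * fconj (\<lambda>z. ereal (f z)) (df (y k)) + ereal (1 - \<eta>) * fconj (\<lambda>z. ereal (f z)) (s k)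
        - ereal (\<eta> * (1 - \<eta>) / (2 * L) * (dual_norm N (df (y k) - s k))\<^sup>2)"
    proof (cases "fconj (\<lambda>z. ereal (f z)) (s k)")
      case PInf thus ?thesis using e by (simp add: fen)
    next
      case MInf
      have "ereal (s k \<bullet> 0) - ereal (f 0) \<le> fconj (\<lambda>z. ereal (f z)) (s k)" by (rule fconj_upper)
      thus ?thesis using MInf by simp
    next
      case (real A)
      have A: "s k \<bullet> u - f u \<le> A" for u
        using fconj_upper[of "s k" u "\<lambda>z. ereal (f z)"] real by simp
      have "fconj (\<lambda>z. ereal (f z)) (s (Suc k)) \<le>
          ereal (\<eta> * (g \<bullet> y k - f (y k)) + (1 - \<eta>) * A - \<eta> * (1 - \<eta>) / (2 * L) * (dual_norm N (g - s k))\<^sup>2)"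
        unfolding fconj_def
      proof (rule SUP_least)
        fix z
        have "((1 - \<eta>) *\<^sub>R s k + \<eta> *\<^sub>R g) \<bullet> z - f z
          \<le> \<eta> * (g \<bullet> y k - f (y k)) + (1 - \<eta>) * A - \<eta> * (1 - \<eta>) / (2 * L) * (dual_norm N (g - s k))\<^sup>2"
          by (rule conj_sc_real[OF norm f_grad f_smooth L_pos e A B])
        thus "ereal (s (Suc k) \<bullet> z) - ereal (f z) \<le> ereal (\<eta> * (g \<bullet> y k - f (y k)) + (1 - \<eta>) * A - \<eta> * (1 - \<eta>) / (2 * L) * (dual_norm N (g - s k))\<^sup>2)"
          unfolding g_def by (simp add: s_step)
      qed
      thus ?thesis using real unfolding fen g_def by simp
    qed
  qed
qed

end
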